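(* For every integer $n\ge2$ and every $m\in\{1,2,\dots,n-1\}$, the coefficient of $u^{m}v^{n+1-m}w^{n-1}$ in $P_{n/(n+1)}(u,v,w)$ (i.e. the coefficient at the lattice point $(m,n+1-m)$ of the Newton polygon) equals $4m$.
   Context: Markov polynomials. Let $x,y,z$ be indeterminates. Consider the set consisting of all rationals $\rho\in[0,1]$, each written in lowest terms $\rho=a/b$ with integers $a\ge 0$, $b\ge 1$, together with the formal symbol $1/0$. Define Laurent polynomials $M_\rho(x,y,z)$ recursively by $M_{1/0}=y$, $M_{0/1}=x$, $M_{1/1}=\frac{x^2+y^2}{z}$, and: whenever $a/b$, $c/d$ are in this set with $|ad-bc|=1$ and $(a+2c)/(b+2d)\in[0,1]$, then $M_{\frac{a+2c}{b+2d}}=\big(M_{c/d}^2+M_{\frac{a+c}{b+d}}^2\big)/M_{a/b}$. This determines $M_\rho$ for every rational $\rho\in[0,1]$. Numerator. For coprime $1\le a\le b$, $P_{a/b}(u,v,w)$ denotes the homogeneous polynomial of degree $a+b-1$ such that $M_{a/b}(x,y,z)=P_{a/b}(x^2,y^2,z^2)/(x^{a-1}y^{b-1}z^{a+b-1})$; its existence is known. *)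

theory Defs
  imports "HOL-Computational_Algebra.Polynomial" "HOL-Computational_Algebra.Fraction_Field"
begin

text \<open>Polynomials in three variables u,v,w with integer coefficients, as nested
univariate polynomials: innermost variable u, middle v, outermost w.
The coefficient of u^i v^j w^k of P is coeff3 P i j k.\<close>

type_synonym poly3 = "int poly poly poly"

text \<open>The field of rational functions in x,y,z (fraction field of poly3);
x is the innermost, y the middle, z the outermost variable.\<close>

type_synonym ratfun3 = "poly3 fract"

definition varx :: ratfun3 where "varx = Fract [:[:[:0, 1:]:]:] 1"
definition vary :: ratfun3 where "vary = Fract [:[:0, 1:]:] 1"
definition varz :: ratfun3 where "varz = Fract [:0, 1:] 1"

definition coeff3 :: "poly3 \<Rightarrow> nat \<Rightarrow> nat \<Rightarrow> nat \<Rightarrow> int" where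
  "coeff3 P i j k = coeff (coeff (coeff P k) j) i"

definition eval3 :: "poly3 \<Rightarrow> ratfun3 \<Rightarrow> ratfun3 \<Rightarrow> ratfun3 \<Rightarrow> ratfun3" where
  "eval3 P a b c =
     poly (map_poly (\<lambda>q. poly (map_poly (\<lambda>r. poly (map_poly of_int r) a) q) b) P) c"

definition homogeneous3 :: "nat \<Rightarrow> poly3 \<Rightarrow> bool" where
  "homogeneous3 d P \<longleftrightarrow> (\<forall>i j k. coeff3 P i j k \<noteq> 0 \<longrightarrow> i + j + k = d)"

text \<open>The Markov Laurent polynomials, following the recursive definition: a fraction
a/b (in lowest terms, 1/0 the formal symbol) is represented by the pair (a,b);
markov_rel (a,b) M means M is (a value of) M_{a/b}.\<close>

inductive markov_rel :: "nat \<times> nat \<Rightarrow> ratfun3 \<Rightarrow> bool" where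
  inf: "markov_rel (1, 0) vary"
| zero: "markov_rel (0, 1) varx"
| one: "markov_rel (1, 1) ((varx ^ 2 + vary ^ 2) / varz)"
| step: "\<lbrakk> markov_rel (a, b) A; markov_rel (c, d) C; markov_rel (a + c, b + d) B;
          \<bar>int a * int d - int b * int c\<bar> = 1;
          (of_nat (a + 2 * c) / of_nat (b + 2 * d) :: rat) \<in> {0..1} \<rbrakk>
         \<Longrightarrow> markov_rel (a + 2 * c, b + 2 * d) ((C ^ 2 + B ^ 2) / A)"

definition markov_M :: "nat \<Rightarrow> nat \<Rightarrow> ratfun3" where
  "markov_M a b = (THE M. markov_rel (a, b) M)"

definition markov_P :: "nat \<Rightarrow> nat \<Rightarrow> poly3" where
  "markov_P a b = (THE P. homogeneous3 (a + b - 1) P \<and>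
      markov_M a b = eval3 P (varx ^ 2) (vary ^ 2) (varz ^ 2)
                     / (varx ^ (a - 1) * vary ^ (b - 1) * varz ^ (a + b - 1)))"

end

theory Submission
  imports Defs
begin


definition rhom :: "('a::comm_ring_1 \<Rightarrow> 'b::comm_ring_1) \<Rightarrow> bool" where
  "rhom f \<longleftrightarrow> f 0 = 0 \<and> f 1 = 1 \<and> (\<forall>a b. f (a+b) = f a + f b) \<and> (\<forall>a b. f (a*b) = f a * f b)"

lemma rhomD:
  assumes "rhom f"
  shows "f 0 = 0" "f 1 = 1" "f (a+b) = f a + f b" "f (a*b) = f a * f b"
    "f (-a) = - f a" "f (a - b) = f a - f b" "f (a^n) = f a ^ n"
proof -
  show 0: "f 0 = 0" and "f 1 = 1" and add: "f (a+b) = f a + f b" and "f (a*b) = f a * f b"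
    using assms unfolding rhom_def by auto
  have "f (-a) + f a = 0" using assms unfolding rhom_def by (metis add.left_inverse)
  then show m: "f (-a) = - f a" by (simp add: eq_neg_iff_add_eq_0)
  have "f (-b) + f b = 0" using assms unfolding rhom_def by (metis add.left_inverse)
  then show "f (a - b) = f a - f b" using assms unfolding rhom_def
    by (metis diff_conv_add_uminus eq_neg_iff_add_eq_0)
  show "f (a^n) = f a ^ n" using assms unfolding rhom_def by (induct n) auto
qed

lemma rhom_map_poly:
  assumes "rhom f" shows "rhom (map_poly f)"
proof -
  have f0: "f 0 = 0" and f1: "f 1 = 1" using rhomD[OF assms] by auto
  have add: "map_poly f (p + q) = map_poly f p + map_poly f q" for p q
    by (intro poly_eqI) (simp add: coeff_map_poly f0 rhomD[OF assms])
  have mult: "map_poly f (p * q) = map_poly f p * map_poly f q" for p q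
  proof (induct p)
    case 0 then show ?case by simp
  next
    case (pCons a p)
    have "map_poly f (pCons a p * q) = map_poly f (smult a q) + map_poly f (pCons 0 (p * q))"
      by (simp add: add)
    also have "\<dots> = smult (f a) (map_poly f q) + pCons 0 (map_poly f p * map_poly f q)"
      by (simp add: map_poly_smult map_poly_pCons f0 rhomD[OF assms] pCons.hyps)
    also have "\<dots> = map_poly f (pCons a p) * map_poly f q"
      by (simp add: map_poly_pCons f0)
    finally show ?case .
  qed
  show ?thesis unfolding rhom_def using add mult f1 by (simp)
qed

lemma rhom_eval:
  assumes "rhom f" shows "rhom (\<lambda>p. poly (map_poly f p) c)"
  using rhom_map_poly[OF assms] unfolding rhom_def by simp

lemma rhom_comm:
  assumes "rhom f" shows "poly (map_poly f p) (f x) = f (poly p x)"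
  by (induct p) (simp_all add: map_poly_pCons rhomD[OF assms])

lemma rhom_of_int:
  assumes "rhom f" shows "f (of_int i) = of_int i"
proof -
  have "f (of_nat n) = of_nat n" for n by (induct n) (simp_all add: rhomD[OF assms])
  then show ?thesis by (cases i) (simp_all add: rhomD[OF assms])
qed

lemma rhom_of_int': "rhom of_int" unfolding rhom_def by simp



definition sqp :: "'a::comm_ring_1 poly \<Rightarrow> 'a poly" where "sqp p = pcompose p [:0,0,1:]"

lemma sqp_0[simp]: "sqp 0 = 0" by (simp add: sqp_def)

lemma sqp_eq0: "sqp (p::'a::idom poly) = 0 \<longleftrightarrow> p = 0"
proof
  assume h: "sqp p = 0"
  show "p = 0"
  proof (rule ccontr)
    assume "p \<noteq> 0"
    show False
    proof (cases "degree p = 0")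
      case True
      then obtain c where "p = [:c:]" by (metis degree_eq_zeroE)
      with \<open>p \<noteq> 0\<close> h show False by (simp add: sqp_def)
    next
      case False
      have "degree (sqp p) = degree p * 2" by (simp add: sqp_def degree_pcompose)
      with False h show False by simp
    qed
  qed
qed simp

lemma sqp_inj: "sqp (p::'a::idom poly) = sqp q \<Longrightarrow> p = q"
  using sqp_eq0[of "p - q"] by (simp add: sqp_def pcompose_diff)

lemma map_poly_inj:
  assumes "inj f" "f 0 = 0" "map_poly f p = map_poly f q" shows "p = q"
proof (rule poly_eqI)
  fix n
  have "coeff (map_poly f p) n = coeff (map_poly f q) n" using assms(3) by simp
  then show "coeff p n = coeff q n" using assms(1,2) by (simp add: coeff_map_poly inj_eq)
qed

definition sq2 :: "int poly poly \<Rightarrow> int poly poly" where "sq2 q = sqp (map_poly sqp q)"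
definition sq3 :: "poly3 \<Rightarrow> poly3" where "sq3 P = sqp (map_poly sq2 P)"

lemma sq2_0[simp]: "sq2 0 = 0" by (simp add: sq2_def)

lemma inj_sqp: "inj (sqp :: 'a::idom poly \<Rightarrow> _)" by (meson injI sqp_inj)
lemma inj_sq2: "inj sq2"
  by (rule injI) (metis sq2_def sqp_inj map_poly_inj inj_sqp sqp_0)
lemma sq3_inj: "sq3 P = sq3 Q \<Longrightarrow> P = Q"
  by (metis sq3_def sqp_inj map_poly_inj inj_sq2 sq2_0)

lemma rhom_const: "rhom (\<lambda>t::'a::comm_ring_1. [:t:])"
  unfolding rhom_def by (simp add: one_pCons)

lemma rhom_Fract: "rhom (\<lambda>t::'a::idom. Fract t 1)"
  unfolding rhom_def by (simp add: Zero_fract_def One_fract_def)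

lemma eval3_Fract:
  "eval3 P (Fract A 1) (Fract B 1) (Fract C 1) =
   Fract (poly (map_poly (\<lambda>q. poly (map_poly (\<lambda>r. poly (map_poly of_int r) A) q) B) P) C) 1"
proof -
  define \<phi> where "\<phi> = (\<lambda>t::poly3. Fract t 1)"
  have h: "rhom \<phi>" unfolding \<phi>_def by (rule rhom_Fract)
  define f1 where "f1 = (\<lambda>r. poly (map_poly (of_int::int\<Rightarrow>poly3) r) A)"
  define f2 where "f2 = (\<lambda>q. poly (map_poly f1 q) B)"
  have f10: "f1 0 = 0" by (simp add: f1_def)
  have f20: "f2 0 = 0" by (simp add: f2_def)
  have oi: "(of_int :: int \<Rightarrow> ratfun3) = \<phi> \<circ> of_int"
    by (rule ext) (simp add: rhom_of_int[OF h])
  have i: "poly (map_poly of_int r) (\<phi> A) = \<phi> (f1 r)" for r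
  proof -
    have "map_poly (of_int :: int \<Rightarrow> ratfun3) r = map_poly \<phi> (map_poly of_int r)"
      by (simp add: oi map_poly_map_poly rhomD[OF h])
    then show ?thesis by (simp add: f1_def rhom_comm[OF h])
  qed
  have m: "poly (map_poly (\<lambda>r. poly (map_poly of_int r) (\<phi> A)) q) (\<phi> B) = \<phi> (f2 q)" for q
  proof -
    have "map_poly (\<lambda>r. poly (map_poly (of_int :: int \<Rightarrow> ratfun3) r) (\<phi> A)) q
          = map_poly \<phi> (map_poly f1 q)"
      by (simp add: i map_poly_map_poly rhomD[OF h] f10 comp_def)
    then show ?thesis by (simp add: f2_def rhom_comm[OF h])
  qed
  have "eval3 P (\<phi> A) (\<phi> B) (\<phi> C) = \<phi> (poly (map_poly f2 P) C)"
  proof -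
    have "map_poly (\<lambda>q. poly (map_poly (\<lambda>r. poly (map_poly (of_int :: int \<Rightarrow> ratfun3) r) (\<phi> A)) q) (\<phi> B)) P
          = map_poly \<phi> (map_poly f2 P)"
      by (simp add: m map_poly_map_poly rhomD[OF h] f20 comp_def)
    then show ?thesis by (simp add: eval3_def rhom_comm[OF h])
  qed
  then show ?thesis by (simp add: \<phi>_def f1_def f2_def)
qed

lemma of_int_poly3: "(of_int i :: poly3) = [:[:[:of_int i:]:]:]"
  by (simp add: of_int_poly)

lemma of_int_poly3': "(of_int :: int \<Rightarrow> poly3) = (\<lambda>x. [:[:[:x:]:]:])"
  by (rule ext) (simp add: of_int_poly3)

lemma inner_sq:
  "poly (map_poly (of_int :: int \<Rightarrow> poly3) r) [:[:[:0,0,1:]:]:] = [:[:sqp r:]:]"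
proof -
  have h: "rhom (\<lambda>t::int poly. [:[:t:]:])" using rhom_const unfolding rhom_def by (simp add: one_pCons)
  have "map_poly (of_int :: int \<Rightarrow> poly3) r = map_poly (\<lambda>t::int poly. [:[:t:]:]) (map_poly (\<lambda>i. [:i:]) r)"
    by (simp add: map_poly_map_poly comp_def of_int_poly3')
  then show ?thesis
    using rhom_comm[OF h, of "map_poly (\<lambda>i. [:i:]) r" "[:0,0,1:]"]
    by (simp add: sqp_def pcompose_altdef)
qed

lemma eval3_sq: "eval3 P (varx^2) (vary^2) (varz^2) = Fract (sq3 P) 1"
proof -
  have x: "varx^2 = Fract [:[:[:0,0,1:]:]:] 1" unfolding varx_def
    by (simp add: power2_eq_square)
  have y: "vary^2 = Fract [:[:0,0,1:]:] 1" unfolding vary_def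
    by (simp add: power2_eq_square)
  have z: "varz^2 = Fract [:0,0,1:] 1" unfolding varz_def
    by (simp add: power2_eq_square)
  have hc: "rhom (\<lambda>t::int poly poly. [:t:])" by (rule rhom_const)
  have m: "poly (map_poly (\<lambda>r. poly (map_poly (of_int :: int \<Rightarrow> poly3) r) [:[:[:0,0,1:]:]:]) q) [:[:0,0,1:]:]
       = [:sq2 q:]" for q
  proof -
    have "map_poly (\<lambda>r. poly (map_poly (of_int :: int \<Rightarrow> poly3) r) [:[:[:0,0,1:]:]:]) q
        = map_poly (\<lambda>t. [:t:]) (map_poly (\<lambda>t. [:t:]) (map_poly sqp q))"
      by (simp add: inner_sq map_poly_map_poly comp_def)
    then show ?thesis
      using rhom_comm[OF hc, of "map_poly (\<lambda>t. [:t:]) (map_poly sqp q)" "[:0,0,1:]"]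
      by (simp add: sq2_def sqp_def pcompose_altdef)
  qed
  have "map_poly (\<lambda>q. poly (map_poly (\<lambda>r. poly (map_poly (of_int :: int \<Rightarrow> poly3) r) [:[:[:0,0,1:]:]:]) q) [:[:0,0,1:]:]) P
      = map_poly (\<lambda>t. [:t:]) (map_poly sq2 P)"
    by (simp add: m map_poly_map_poly comp_def)
  then show ?thesis unfolding x y z eval3_Fract
    by (simp add: sq3_def sqp_def pcompose_altdef)
qed



definition U :: poly3 where "U = [:[:[:0,1:]:]:]"
definition V :: poly3 where "V = [:[:0,1:]:]"
definition W :: poly3 where "W = [:0,1:]"

fun Pm :: "nat \<Rightarrow> poly3" where
  "Pm 0 = 1"
| "Pm (Suc 0) = U*W + (U+V)^2"
| "Pm (Suc (Suc k)) = (U+V)*(W+U+V)*Pm (Suc k) - U*V*W^2*Pm k"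

lemma conv1:
  fixes p q :: "'a::comm_ring_1 poly"
  assumes "coeff (p*q) n \<noteq> 0" shows "\<exists>a\<le>n. coeff p a * coeff q (n-a) \<noteq> 0"
  using assms unfolding coeff_mult by (meson sum.neutral atMost_iff)

lemma conv2:
  fixes p q :: "'a::comm_ring_1 poly poly"
  assumes "coeff (coeff (p*q) n) m \<noteq> 0" shows "\<exists>a\<le>n. coeff (coeff p a * coeff q (n-a)) m \<noteq> 0"
  using assms unfolding coeff_mult coeff_sum by (meson sum.neutral atMost_iff)

lemma conv3:
  fixes p q :: "'a::comm_ring_1 poly poly poly"
  assumes "coeff (coeff (coeff (p*q) n) m) l \<noteq> 0"
  shows "\<exists>a\<le>n. coeff (coeff (coeff p a * coeff q (n-a)) m) l \<noteq> 0"
  using assms unfolding coeff_mult coeff_sum by (meson sum.neutral atMost_iff)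

lemma coeff3_mult_nz:
  assumes "coeff3 (P*Q) i j k \<noteq> 0"
  shows "\<exists>a b c. a \<le> k \<and> b \<le> j \<and> c \<le> i \<and> coeff3 P c b a \<noteq> 0 \<and> coeff3 Q (i-c) (j-b) (k-a) \<noteq> 0"
proof -
  from conv3[OF assms[unfolded coeff3_def]] obtain a where a: "a \<le> k"
    "coeff (coeff (coeff P a * coeff Q (k-a)) j) i \<noteq> 0" by blast
  from conv2[OF a(2)] obtain b where b: "b \<le> j"
    "coeff (coeff (coeff P a) b * coeff (coeff Q (k-a)) (j-b)) i \<noteq> 0" by blast
  from conv1[OF b(2)] obtain c where c: "c \<le> i"
    "coeff (coeff (coeff P a) b) c * coeff (coeff (coeff Q (k-a)) (j-b)) (i-c) \<noteq> 0" by blast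
  show ?thesis using a(1) b(1) c unfolding coeff3_def by (intro exI[of _ a] exI[of _ b] exI[of _ c]) auto
qed

lemma hom_mult:
  assumes "homogeneous3 d1 P" "homogeneous3 d2 Q" shows "homogeneous3 (d1+d2) (P*Q)"
  unfolding homogeneous3_def
proof (intro allI impI)
  fix i j k assume "coeff3 (P*Q) i j k \<noteq> 0"
  from coeff3_mult_nz[OF this] obtain a b c where
    "a \<le> k" "b \<le> j" "c \<le> i" "coeff3 P c b a \<noteq> 0" "coeff3 Q (i-c) (j-b) (k-a) \<noteq> 0" by blast
  with assms show "i + j + k = d1 + d2" unfolding homogeneous3_def by fastforce
qed

lemma coeff3_add[simp]: "coeff3 (P+Q) i j k = coeff3 P i j k + coeff3 Q i j k"
  by (simp add: coeff3_def)
lemma coeff3_diff[simp]: "coeff3 (P-Q) i j k = coeff3 P i j k - coeff3 Q i j k"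
  by (simp add: coeff3_def)

lemma hom_add: "homogeneous3 d P \<Longrightarrow> homogeneous3 d Q \<Longrightarrow> homogeneous3 d (P+Q)"
  unfolding homogeneous3_def by (metis add.right_neutral coeff3_add)
lemma hom_diff: "homogeneous3 d P \<Longrightarrow> homogeneous3 d Q \<Longrightarrow> homogeneous3 d (P-Q)"
  unfolding homogeneous3_def by (metis diff_zero coeff3_diff)
lemma hom_pow: "homogeneous3 d P \<Longrightarrow> homogeneous3 (d*n) (P^n)"
proof (induct n)
  case 0 then show ?case by (auto simp: homogeneous3_def coeff3_def coeff_1 split: if_splits)
next
  case (Suc n) then show ?case using hom_mult[of d P "d*n" "P^n"] by (simp add: add.commute)
qed

lemma hom_U: "homogeneous3 1 U" by (auto simp: homogeneous3_def coeff3_def U_def coeff_pCons split: nat.splits)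
lemma hom_V: "homogeneous3 1 V" by (auto simp: homogeneous3_def coeff3_def V_def coeff_pCons split: nat.splits)
lemma hom_W: "homogeneous3 1 W" by (auto simp: homogeneous3_def coeff3_def W_def coeff_pCons split: nat.splits)
lemma hom_1: "homogeneous3 0 1" by (auto simp: homogeneous3_def coeff3_def coeff_1 split: if_splits)

lemma hom_Pm: "homogeneous3 (2*k) (Pm k)"
proof (induct k rule: Pm.induct)
  case 1 then show ?case using hom_1 by simp
next
  case 2
  have "homogeneous3 (1+1) (U*W)" by (rule hom_mult[OF hom_U hom_W])
  moreover have "homogeneous3 (1*2) ((U+V)^2)" by (rule hom_pow[OF hom_add[OF hom_U hom_V]])
  ultimately show ?case using hom_add[of 2 "U*W" "(U+V)^2"] by (simp add: numeral_2_eq_2)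
next
  case (3 k)
  have s: "homogeneous3 1 (U+V)" by (rule hom_add[OF hom_U hom_V])
  have t: "homogeneous3 1 (W+U+V)" by (rule hom_add[OF hom_add[OF hom_W hom_U] hom_V])
  have a: "homogeneous3 (1+1+(2*Suc k)) ((U+V)*(W+U+V)*Pm (Suc k))"
    by (rule hom_mult[OF hom_mult[OF s t] 3(1)])
  have b: "homogeneous3 (1+1+1*2+2*k) (U*V*W^2*Pm k)"
    by (rule hom_mult[OF hom_mult[OF hom_mult[OF hom_U hom_V] hom_pow[OF hom_W]] 3(2)])
  have e1: "1+1+(2*Suc k) = 2 * Suc (Suc k)" and e2: "1+1+1*2+2*k = 2 * Suc (Suc k)" by simp_all
  show ?case using hom_diff[OF a[unfolded e1] b[unfolded e2]] by simp
qed



definition u2 :: "int poly poly" where "u2 = [:[:0,1:]:]"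
definition v2 :: "int poly poly" where "v2 = [:0,1:]"
abbreviation "s2 \<equiv> u2 + v2"

lemma U_u2: "U = [:u2:]" by (simp add: U_def u2_def)
lemma V_v2: "V = [:v2:]" by (simp add: V_def v2_def)

lemma Pm_rec: "Pm (Suc (Suc k)) = smult (s2*s2) (Pm (Suc k)) + pCons 0 (smult s2 (Pm (Suc k)))
   - pCons 0 (pCons 0 (smult (u2*v2) (Pm k)))"
proof -
  have e: "(U+V)*(W+U+V) = [:s2*s2, s2:]" "U*V*W^2 = [:0,0,u2*v2:]"
    by (simp_all add: U_u2 V_v2 W_def power2_eq_square algebra_simps)
  have "Pm (Suc (Suc k)) = [:s2*s2, s2:] * Pm (Suc k) - [:0,0,u2*v2:] * Pm k"
    by (simp only: Pm.simps e)
  then show ?thesis by simp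
qed

declare Pm.simps(3)[simp del]

lemma coeff_Pm_rec: "coeff (Pm (Suc (Suc k))) j = s2*s2*coeff (Pm (Suc k)) j
  + (if j = 0 then 0 else s2 * coeff (Pm (Suc k)) (j-1))
  - (if j < 2 then 0 else u2*v2*coeff (Pm k) (j-2))"
  unfolding Pm_rec by (cases j; cases "j - 1") (auto simp: coeff_pCons)

lemma Pm_top: "(\<forall>j>k. coeff (Pm k) j = 0) \<and> coeff (Pm k) k = u2^k"
proof (induct k rule: Pm.induct)
  case 1 then show ?case by (simp add: coeff_1)
next
  case 2 then show ?case
    by (auto simp: U_u2 V_v2 W_def power2_eq_square coeff_pCons split: nat.splits)
next
  case (3 k)
  have a: "coeff (Pm (Suc (Suc k))) j = 0" if "j > Suc (Suc k)" for j
    using 3 that by (simp add: coeff_Pm_rec)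
  have b: "coeff (Pm (Suc (Suc k))) (Suc (Suc k)) = u2^(Suc (Suc k))"
    using 3 by (simp add: coeff_Pm_rec algebra_simps)
  show ?case using a b by blast
qed

fun Qm :: "nat \<Rightarrow> int poly poly" where
  "Qm 0 = 0"
| "Qm (Suc 0) = 1"
| "Qm (Suc (Suc k)) = s2 * Qm (Suc k) - u2*v2*Qm k + u2^(Suc k)"

lemma Pm_sub: "coeff (Pm (Suc k)) k = s2^2 * Qm (Suc k)"
proof (induct k rule: Qm.induct)
  case 1 then show ?case
    by (simp add: U_u2 V_v2 W_def power2_eq_square coeff_pCons)
next
  case 2
  have "coeff (Pm (Suc 0)) 0 = s2^2" by (simp add: U_u2 V_v2 W_def power2_eq_square coeff_pCons)
  then show ?case using Pm_top[of 1] by (simp add: coeff_Pm_rec algebra_simps power2_eq_square)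
next
  case (3 k)
  have "coeff (Pm (Suc (Suc (Suc k)))) (Suc (Suc k)) = s2*s2*coeff (Pm (Suc (Suc k))) (Suc (Suc k))
    + s2 * coeff (Pm (Suc (Suc k))) (Suc k) - u2*v2*coeff (Pm (Suc k)) k"
    by (simp only: coeff_Pm_rec) simp
  also have "\<dots> = s2*s2*u2^(Suc (Suc k)) + s2 * (s2^2 * Qm (Suc (Suc k))) - u2*v2*(s2^2 * Qm (Suc k))"
    using 3 Pm_top[of "Suc (Suc k)"] by simp
  also have "\<dots> = s2^2 * Qm (Suc (Suc (Suc k)))"
    by (simp only: Qm.simps) (simp add: algebra_simps power2_eq_square)
  finally show ?case .
qed

definition c2 :: "int poly poly \<Rightarrow> nat \<Rightarrow> nat \<Rightarrow> int" where "c2 p i j = coeff (coeff p j) i"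

lemma c2_add[simp]: "c2 (p+q) i j = c2 p i j + c2 q i j" by (simp add: c2_def)
lemma c2_diff[simp]: "c2 (p-q) i j = c2 p i j - c2 q i j" by (simp add: c2_def)
lemma c2_u2: "c2 (u2*p) i j = (if i = 0 then 0 else c2 p (i-1) j)"
  by (cases i) (simp_all add: c2_def u2_def coeff_pCons)
lemma c2_v2: "c2 (v2*p) i j = (if j = 0 then 0 else c2 p i (j-1))"
  by (cases j) (simp_all add: c2_def v2_def coeff_pCons)
lemma c2_u2pow: "c2 (u2^n) i j = (if i = n \<and> j = 0 then 1 else 0)"
proof -
  have "u2^n = [:monom 1 n:]" unfolding u2_def
    by (induct n) (simp_all add: monom_Suc algebra_simps one_pCons)
  then show ?thesis by (simp add: c2_def coeff_pCons split: nat.splits)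
qed
lemma c2_1: "c2 1 i j = (if i = 0 \<and> j = 0 then 1 else 0)"
  by (simp add: c2_def coeff_1)
lemma c2_0: "c2 0 i j = 0" by (simp add: c2_def)

lemma Qm_coeff: "c2 (Qm k) i j = (if i < k \<and> i + j + 1 = k then int (i+1) else 0)"
proof (induct k arbitrary: i j rule: Qm.induct)
  case 1 then show ?case by (simp add: c2_0)
next
  case 2 then show ?case by (simp add: c2_1)
next
  case (3 k)
  have e: "Qm (Suc (Suc k)) = u2 * Qm (Suc k) + v2 * Qm (Suc k) - u2*(v2*Qm k) + u2^(Suc k)"
    by (simp add: algebra_simps)
  show ?case unfolding e
    by (simp add: c2_u2 c2_v2 c2_u2pow 3) presburger
qed

lemma coeff_final:
  assumes "n \<ge> 2" "1 \<le> m" "m \<le> n - 1"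
  shows "coeff3 (Pm n) m (n + 1 - m) (n - 1) = 4 * int m"
proof -
  obtain k where n: "n = Suc k" using assms(1) by (cases n) auto
  have e: "s2^2 * Qm n = u2*(u2*Qm n) + u2*(v2*Qm n) + u2*(v2*Qm n) + v2*(v2*Qm n)"
    by (simp add: algebra_simps power2_eq_square)
  have "coeff3 (Pm n) m (n + 1 - m) (n - 1) = c2 (s2^2 * Qm n) m (n + 1 - m)"
    unfolding coeff3_def c2_def using Pm_sub[of k] n by simp
  also have "\<dots> = 4 * int m" unfolding e c2_add c2_u2 c2_v2 Qm_coeff
    using assms by simp presburger
  finally show ?thesis .
qed



definition M11 :: ratfun3 where "M11 = (varx^2 + vary^2) / varz"

fun F :: "nat \<Rightarrow> ratfun3" where
  "F 0 = varx"
| "F (Suc 0) = (varx^2 + M11^2) / vary"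
| "F (Suc (Suc k)) = (M11^2 + F (Suc k)^2) / F k"

lemma r10: "markov_rel (1,0) M \<Longrightarrow> M = vary"
  by (erule markov_rel.cases) auto

lemma r01: "markov_rel (0,1) M \<Longrightarrow> M = varx"
  by (erule markov_rel.cases) auto

lemma r11: assumes "markov_rel (1,1) M" shows "M = M11"
  using assms
proof (cases rule: markov_rel.cases)
  case (step a b A c d C B)
  then have "c = 0" "a = 1" by arith+
  have "d = 0" using step by arith
  have "\<bar>int a * int d - int b * int c\<bar> = 1" using step by simp
  then have False using \<open>d = 0\<close> \<open>c = 0\<close> by simp
  then show ?thesis ..
qed (auto simp: M11_def)

lemma arith_cd:
  fixes a b c d k :: nat
  assumes "a + 2*c = k" "b + 2*d = Suc k" "\<bar>int a * int d - int b * int c\<bar> = 1" "k \<ge> 2"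
  shows "c = 1 \<and> d = 1"
proof -
  define t where "t = int d - int c"
  have ia: "int a = int k - 2 * int c" and ib: "int b = int k + 1 - 2 * int d"
    using assms(1,2) by linarith+
  have e: "int a * int d - int b * int c = int k * t - int c"
    unfolding ia ib t_def by (simp add: algebra_simps)
  have c2: "2 * int c \<le> int k" "2 * int d \<le> int k + 1" using assms(1,2) by linarith+
  consider "t = 0" | "t \<ge> 1" | "t \<le> -1" by linarith
  then show ?thesis
  proof cases
    case 1 then show ?thesis using e assms(3) unfolding t_def by auto
  next
    case 2
    have "int k * t \<ge> int k * 1" using 2 by (intro mult_left_mono) auto
    then show ?thesis using e assms(3,4) c2 2 unfolding t_def by linarith
  next
    case 3
    have "int k * t \<le> int k * (-1)" using 3 by (intro mult_left_mono) auto
    then show ?thesis using e assms(3,4) c2 unfolding t_def by linarith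
  qed
qed

lemma rk: "markov_rel (k, Suc k) M \<Longrightarrow> M = F k"
proof (induct k arbitrary: M rule: less_induct)
  case (less k)
  show ?case
  proof (cases "k = 0")
    case True then show ?thesis using less.prems r01 by simp
  next
    case k0: False
    show ?thesis
    proof (cases "k = 1")
      case True
      from less.prems[unfolded True] show ?thesis
      proof (cases rule: markov_rel.cases)
        case (step a b A c d C B)
        have c0: "c = 0" and a1: "a = 1" using step(1) by auto
        have "\<bar>int d\<bar> = 1" using step c0 a1 by simp
        then have d1: "d = 1" by simp
        have bd: "b + 2*d = 2" using step by simp
        then have b0: "b = 0" using d1 by simp
        have "A = vary" using r10 step a1 b0 by simp
        moreover have "C = varx" using r01 step c0 d1 by simp
        moreover have "B = M11" using r11 step a1 b0 c0 d1 by simp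
        ultimately show ?thesis using step True a1 c0 by simp
      qed auto
    next
      case False
      then obtain j where kj: "k = Suc (Suc j)" using k0 by (metis not0_implies_Suc One_nat_def)
      from less.prems show ?thesis
      proof (cases rule: markov_rel.cases)
        case (step a b A c d C B)
        have "c = 1 \<and> d = 1" using arith_cd[of a c k b d] step kj by auto
        have abcd: "a + 2*c = k" "b + 2*d = Suc k" using step by auto
        then have cd: "c = 1" "d = 1" "a = j" "b = Suc j" using \<open>c = 1 \<and> d = 1\<close> kj by auto
        have "A = F j" using less.hyps[of j A] step cd kj by auto
        moreover have "C = M11" using r11 step cd by auto
        moreover have "B = F (Suc j)" using less.hyps[of "Suc j" B] step cd kj by auto
        ultimately show ?thesis using step kj cd by simp
      qed (use kj in auto)
    qed
  qed
qed

lemma rk_ex: "markov_rel (k, Suc k) (F k)"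
proof (induct k rule: F.induct)
  case 1 then show ?case using markov_rel.zero by simp
next
  case 2
  have m: "markov_rel (1,1) M11" unfolding M11_def by (rule markov_rel.one)
  have "markov_rel (1 + 2*0, 0 + 2*1) ((varx^2 + M11^2) / vary)"
    by (rule markov_rel.step[OF markov_rel.inf markov_rel.zero]) (use m in auto)
  then show ?case by simp
next
  case (3 k)
  have m: "markov_rel (1,1) M11" unfolding M11_def by (rule markov_rel.one)
  have "markov_rel (k + 2*1, Suc k + 2*1) ((M11^2 + F (Suc k)^2) / F k)"
    by (rule markov_rel.step[OF 3(2) m]) (use 3(1) in auto)
  then show ?case by simp
qed

lemma markov_M_k: "markov_M k (Suc k) = F k"
  unfolding markov_M_def using rk rk_ex by (intro the_equality) auto



lemma rhom_eval3: "rhom (\<lambda>P. eval3 P a b c)"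
  unfolding eval3_def by (intro rhom_eval rhom_of_int')

lemma eval3_U: "eval3 U a b c = a" by (simp add: eval3_def U_def map_poly_pCons)
lemma eval3_V: "eval3 V a b c = b" by (simp add: eval3_def V_def map_poly_pCons)
lemma eval3_W: "eval3 W a b c = c" by (simp add: eval3_def W_def map_poly_pCons)

abbreviation "X \<equiv> varx^2"
abbreviation "Y \<equiv> vary^2"
abbreviation "Z \<equiv> varz^2"

definition E :: "nat \<Rightarrow> ratfun3" where "E k = eval3 (Pm k) X Y Z"

lemma E0: "E 0 = 1" by (simp add: E_def rhomD[OF rhom_eval3])
lemma E1: "E (Suc 0) = X*Z + (X+Y)^2"
  by (simp add: E_def rhomD[OF rhom_eval3] eval3_U eval3_V eval3_W)
lemma E_rec: "E (Suc (Suc k)) = (X+Y)*(Z+X+Y)*E (Suc k) - X*Y*Z^2*E k"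
  by (simp add: E_def Pm.simps(3) rhomD[OF rhom_eval3] eval3_U eval3_V eval3_W)

lemma Fract1_eq0: "Fract (t::'a::idom) 1 = 0 \<longleftrightarrow> t = 0"
  by (simp add: Zero_fract_def eq_fract)

lemma varx_nz: "varx \<noteq> 0" by (simp add: varx_def Fract1_eq0)
lemma vary_nz: "vary \<noteq> 0" by (simp add: vary_def Fract1_eq0)
lemma varz_nz: "varz \<noteq> 0" by (simp add: varz_def Fract1_eq0)

lemma Pm_nz: "Pm k \<noteq> 0"
proof
  assume "Pm k = 0"
  then have "coeff (Pm k) k = 0" by simp
  moreover have "u2 \<noteq> 0" by (simp add: u2_def)
  ultimately show False using Pm_top[of k] by simp
qed

lemma E_nz: "E k \<noteq> 0"
proof
  assume "E k = 0"
  then have "sq3 (Pm k) = 0" by (simp add: E_def eval3_sq Fract1_eq0)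
  then have "sq3 (Pm k) = sq3 0" by (simp add: sq3_def sqp_def)
  then show False using sq3_inj Pm_nz by blast
qed

definition D :: ratfun3 where "D = varx * vary * varz^2"
lemma D_nz: "D \<noteq> 0" by (simp add: D_def varx_nz vary_nz varz_nz)

definition G :: "nat \<Rightarrow> ratfun3" where "G k = varx * E k / D^k"
definition T :: ratfun3 where "T = (X+Y)*(Z+X+Y) / D"

lemma G_nz: "G k \<noteq> 0" by (simp add: G_def varx_nz E_nz D_nz)

lemma G_rec: "G (Suc (Suc k)) = T * G (Suc k) - G k"
proof -
  have D2: "X*Y*Z^2 = D^2" by (simp add: D_def power2_eq_square algebra_simps)
  have "G (Suc (Suc k)) = varx * ((X+Y)*(Z+X+Y)*E (Suc k) - D^2*E k) / D^(Suc (Suc k))"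
    by (simp only: G_def E_rec D2)
  also have "\<dots> = T * G (Suc k) - G k"
    using D_nz by (simp add: G_def T_def field_simps power2_eq_square)
  finally show ?thesis .
qed

lemma G0: "G 0 = varx" by (simp add: G_def E0)
lemma G1: "G (Suc 0) = varx * (X*Z + (X+Y)^2) / D" by (simp add: G_def E1)

lemma G_inv: "G (Suc (Suc k)) * G k - G (Suc k)^2 = M11^2"
proof (induct k)
  case 0
  have "G (Suc (Suc 0)) = T * G (Suc 0) - G 0" using G_rec[of 0] by simp
  then show ?case using varx_nz vary_nz varz_nz
    by (simp add: G0 G1 T_def D_def M11_def field_simps power2_eq_square)
next
  case (Suc k)
  have d: "G (Suc (Suc (Suc k))) = T * G (Suc (Suc k)) - G (Suc k)" by (rule G_rec)
  have a: "T * G (Suc k) - G (Suc (Suc k)) = G k" using G_rec[of k] by simp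
  have "G (Suc (Suc (Suc k))) * G (Suc k) - G (Suc (Suc k))^2
      = G (Suc (Suc k)) * (T * G (Suc k) - G (Suc (Suc k))) - G (Suc k)^2"
    unfolding d by (simp add: algebra_simps power2_eq_square)
  also have "\<dots> = G (Suc (Suc k)) * G k - G (Suc k)^2" unfolding a ..
  finally show ?case using Suc by simp
qed

lemma F_G: "F k = G k"
proof (induct k rule: F.induct)
  case 1 then show ?case by (simp add: G0)
next
  case 2 then show ?case using varx_nz vary_nz varz_nz
    by (simp add: G1 D_def M11_def field_simps power2_eq_square)
next
  case (3 k)
  have "F (Suc (Suc k)) = (M11^2 + G (Suc k)^2) / G k" using 3 by simp
  also have "\<dots> = G (Suc (Suc k))" using G_inv[of k] G_nz[of k]
    by (simp add: field_simps)
  finally show ?case .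
qed

lemma markov_P_n:
  assumes "n \<ge> 1" shows "markov_P n (n + 1) = Pm n"
proof -
  define den where "den = varx ^ (n - 1) * vary ^ (n + 1 - 1) * varz ^ (n + (n + 1) - 1)"
  have den_nz: "den \<noteq> 0" by (simp add: den_def varx_nz vary_nz varz_nz)
  have Dn: "D^n = varx * den"
  proof -
    obtain k where n: "n = Suc k" using assms by (cases n) auto
    show ?thesis unfolding den_def D_def n
      by (simp add: power_mult_distrib power_mult[symmetric] mult_2_right algebra_simps power2_eq_square power_add)
  qed
  have eqn: "markov_M n (n+1) = eval3 (Pm n) X Y Z / den"
    using markov_M_k[of n] F_G[of n] varx_nz
    by (simp add: G_def E_def Dn)
  show ?thesis unfolding markov_P_def
  proof (rule the_equality)
    show "homogeneous3 (n + (n + 1) - 1) (Pm n) \<and>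
      markov_M n (n + 1) = eval3 (Pm n) X Y Z /
        (varx ^ (n - 1) * vary ^ (n + 1 - 1) * varz ^ (n + (n + 1) - 1))"
      using hom_Pm[of n] eqn unfolding den_def by (simp add: mult_2)
  next
    fix P assume h: "homogeneous3 (n + (n + 1) - 1) P \<and>
      markov_M n (n + 1) = eval3 P X Y Z /
        (varx ^ (n - 1) * vary ^ (n + 1 - 1) * varz ^ (n + (n + 1) - 1))"
    then have "eval3 P X Y Z / den = eval3 (Pm n) X Y Z / den" using eqn unfolding den_def by simp
    then have "eval3 P X Y Z = eval3 (Pm n) X Y Z" using den_nz by simp
    then have "sq3 P = sq3 (Pm n)" by (simp add: eval3_sq eq_fract)
    then show "P = Pm n" by (rule sq3_inj)
  qed
qed

theorem theorem9p2:
  fixes n m :: nat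
  assumes "n \<ge> 2" and "1 \<le> m" and "m \<le> n - 1"
  shows "coeff3 (markov_P n (n + 1)) m (n + 1 - m) (n - 1) = 4 * int m"
  using markov_P_n[of n] coeff_final[OF assms] assms by simp

end
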